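(* Let $G=(N,A)$ be an arc-compressed $s$-$t$ DAG and let $uv\in A$. Then $\mathrm{ext}(uv)$ is a maximal safe sequence of arcs (for arc-path covers) if and only if $uv$ is a leaf in both the arc $s$-dominator tree and the arc $t$-dominator tree of $G$.
   Context: An $s$-$t$ DAG is a directed acyclic multigraph (parallel arcs allowed) with a unique source $s$ and a unique sink $t$ such that every node is reachable from $s$ and every node reaches $t$. It is arc-compressed if no node has both indegree exactly one and outdegree exactly one. An arc $ab$ $s$-dominates an arc $cd$ if $ab=cd$ or every $s$-$c$ path contains $ab$; $ab$ $t$-dominates $cd$ if $ab=cd$ or every $d$-$t$ path contains $ab$; strictly if also $ab\neq cd$. The immediate $s$-dominator of $cd$ is the strict $s$-dominator of $cd$ that is $s$-dominated by all its strict $s$-dominators. The arc $s$-dominator tree has node set $A$ plus an abstract root, the parent of an arc being its immediate $s$-dominator, or the root if it has no strict $s$-dominator; the arc $t$-dominator tree is defined symmetrically. An arc is a leaf if it is the parent of no arc. An arc $ab$ is a $x$-$y$ bridge if every $x$-$y$ path contains it; $\mathrm{ext}(uv)$ is the sequence of $s$-$u$ bridges (in path order), followed by $uv$, followed by the sequence of $v$-$t$ bridges. A sequence of arcs is a list of arcs each of which reaches the next (arc $ab$ reaches $cd$ if there is a $b$-$c$ path); $X$ is a subsequence of $Y$ if every arc of $X$ occurs in $Y$. An arc-path cover is a set of $s$-$t$ paths covering every arc. $X$ is safe if in every arc-path cover it is a subsequence of some path of the cover (sequences in no $s$-$t$ path are unsafe); it is maximal safe if it is safe and not a proper subsequence of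 another safe sequence of arcs. *)

theory Defs
  imports "Graph_Theory.Digraph" "Graph_Theory.Arc_Walk"
begin

(* Directed multigraph G (parallel arcs allowed: arcs are abstract objects with tail/head).
   Paths are arc lists (pre_digraph.apath); an x-x path may be empty. *)

definition is_dag :: "('v,'e) pre_digraph \<Rightarrow> bool" where
  "is_dag G \<longleftrightarrow> (\<forall>u p. pre_digraph.awalk G u p u \<longrightarrow> p = [])"

definition st_dag :: "('v,'e) pre_digraph \<Rightarrow> 'v \<Rightarrow> 'v \<Rightarrow> bool" where
  "st_dag G s t \<longleftrightarrow> fin_digraph G \<and> is_dag G \<and> s \<in> verts G \<and> t \<in> verts G
     \<and> {v \<in> verts G. in_degree G v = 0} = {s}
     \<and> {v \<in> verts G. out_degree G v = 0} = {t}
     \<and> (\<forall>v \<in> verts G. (\<exists>p. pre_digraph.apath G s p v) \<and> (\<exists>p. pre_digraph.apath G v p t))"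

definition arc_compressed :: "('v,'e) pre_digraph \<Rightarrow> bool" where
  "arc_compressed G \<longleftrightarrow> (\<forall>v \<in> verts G. \<not> (in_degree G v = 1 \<and> out_degree G v = 1))"

definition s_dom :: "('v,'e) pre_digraph \<Rightarrow> 'v \<Rightarrow> 'e \<Rightarrow> 'e \<Rightarrow> bool" where
  "s_dom G s ab cd \<longleftrightarrow> ab = cd \<or> (\<forall>p. pre_digraph.apath G s p (tail G cd) \<longrightarrow> ab \<in> set p)"

definition t_dom :: "('v,'e) pre_digraph \<Rightarrow> 'v \<Rightarrow> 'e \<Rightarrow> 'e \<Rightarrow> bool" where
  "t_dom G t ab cd \<longleftrightarrow> ab = cd \<or> (\<forall>p. pre_digraph.apath G (head G cd) p t \<longrightarrow> ab \<in> set p)"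

definition strict_s_dom :: "('v,'e) pre_digraph \<Rightarrow> 'v \<Rightarrow> 'e \<Rightarrow> 'e \<Rightarrow> bool" where
  "strict_s_dom G s ab cd \<longleftrightarrow> ab \<in> arcs G \<and> s_dom G s ab cd \<and> ab \<noteq> cd"

definition strict_t_dom :: "('v,'e) pre_digraph \<Rightarrow> 'v \<Rightarrow> 'e \<Rightarrow> 'e \<Rightarrow> bool" where
  "strict_t_dom G t ab cd \<longleftrightarrow> ab \<in> arcs G \<and> t_dom G t ab cd \<and> ab \<noteq> cd"

definition is_idom_s :: "('v,'e) pre_digraph \<Rightarrow> 'v \<Rightarrow> 'e \<Rightarrow> 'e \<Rightarrow> bool" where
  "is_idom_s G s x e \<longleftrightarrow> strict_s_dom G s x e \<and> (\<forall>y. strict_s_dom G s y e \<longrightarrow> s_dom G s y x)"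

definition is_idom_t :: "('v,'e) pre_digraph \<Rightarrow> 'v \<Rightarrow> 'e \<Rightarrow> 'e \<Rightarrow> bool" where
  "is_idom_t G t x e \<longleftrightarrow> strict_t_dom G t x e \<and> (\<forall>y. strict_t_dom G t y e \<longrightarrow> t_dom G t y x)"

definition s_dom_leaf :: "('v,'e) pre_digraph \<Rightarrow> 'v \<Rightarrow> 'e \<Rightarrow> bool" where
  "s_dom_leaf G s a \<longleftrightarrow> \<not> (\<exists>e \<in> arcs G. is_idom_s G s a e)"

definition t_dom_leaf :: "('v,'e) pre_digraph \<Rightarrow> 'v \<Rightarrow> 'e \<Rightarrow> bool" where
  "t_dom_leaf G t a \<longleftrightarrow> \<not> (\<exists>e \<in> arcs G. is_idom_t G t a e)"

definition bridge :: "('v,'e) pre_digraph \<Rightarrow> 'v \<Rightarrow> 'v \<Rightarrow> 'e \<Rightarrow> bool" where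
  "bridge G x y ab \<longleftrightarrow> ab \<in> arcs G \<and> (\<forall>p. pre_digraph.apath G x p y \<longrightarrow> ab \<in> set p)"

(* ext(uv): s-u bridges in path order (order along an s-u path), uv, v-t bridges in path order *)
definition ext :: "('v,'e) pre_digraph \<Rightarrow> 'v \<Rightarrow> 'v \<Rightarrow> 'e \<Rightarrow> 'e list" where
  "ext G s t uv =
     filter (bridge G s (tail G uv)) (SOME p. pre_digraph.apath G s p (tail G uv))
     @ [uv] @
     filter (bridge G (head G uv) t) (SOME p. pre_digraph.apath G (head G uv) p t)"

definition arc_reaches :: "('v,'e) pre_digraph \<Rightarrow> 'e \<Rightarrow> 'e \<Rightarrow> bool" where
  "arc_reaches G ab cd \<longleftrightarrow> (\<exists>p. pre_digraph.apath G (head G ab) p (tail G cd))"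

definition arc_sequence :: "('v,'e) pre_digraph \<Rightarrow> 'e list \<Rightarrow> bool" where
  "arc_sequence G X \<longleftrightarrow> set X \<subseteq> arcs G \<and>
     (\<forall>i. Suc i < length X \<longrightarrow> arc_reaches G (X ! i) (X ! Suc i))"

definition subseq_arcs :: "'e list \<Rightarrow> 'e list \<Rightarrow> bool" where
  "subseq_arcs X Y \<longleftrightarrow> set X \<subseteq> set Y"

definition arc_path_cover :: "('v,'e) pre_digraph \<Rightarrow> 'v \<Rightarrow> 'v \<Rightarrow> 'e list set \<Rightarrow> bool" where
  "arc_path_cover G s t C \<longleftrightarrow> (\<forall>P \<in> C. pre_digraph.apath G s P t) \<and> (\<forall>e \<in> arcs G. \<exists>P \<in> C. e \<in> set P)"

definition safe :: "('v,'e) pre_digraph \<Rightarrow> 'v \<Rightarrow> 'v \<Rightarrow> 'e list \<Rightarrow> bool" where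
  "safe G s t X \<longleftrightarrow> arc_sequence G X \<and>
     (\<exists>P. pre_digraph.apath G s P t \<and> subseq_arcs X P) \<and>
     (\<forall>C. arc_path_cover G s t C \<longrightarrow> (\<exists>P \<in> C. subseq_arcs X P))"

definition maximal_safe :: "('v,'e) pre_digraph \<Rightarrow> 'v \<Rightarrow> 'v \<Rightarrow> 'e list \<Rightarrow> bool" where
  "maximal_safe G s t X \<longleftrightarrow> safe G s t X \<and>
     \<not> (\<exists>Y. safe G s t Y \<and> subseq_arcs X Y \<and> X \<noteq> Y)"

end

theory Submission
  imports Defs
begin

locale sdag = fin_digraph G for G :: "('v,'e) pre_digraph" +
  fixes s t :: 'v
  assumes st: "st_dag G s t"
begin

lemma dag: "is_dag G" using st by (simp add: st_dag_def)
lemma s_in: "s \<in> verts G" using st by (simp add: st_dag_def)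
lemma t_in: "t \<in> verts G" using st by (simp add: st_dag_def)

lemma walk_apath: assumes "awalk u p v" shows "apath u p v"
proof (rule ccontr)
  assume "\<not> apath u p v"
  then have "\<not> distinct (awalk_verts u p)" using assms by (simp add: apath_def)
  then obtain q r ss w where "p = q @ r @ ss" "0 < length r" "awalk w r w"
    using awalk_not_distinct_decomp[OF assms] by blast
  then show False using dag unfolding is_dag_def by auto
qed

lemma apath_iff: "apath u p v \<longleftrightarrow> awalk u p v"
  using walk_apath by (auto simp: apath_def)

lemma from_s: "v \<in> verts G \<Longrightarrow> \<exists>p. awalk s p v"
  using st by (auto simp: st_dag_def apath_def)
lemma to_t: "v \<in> verts G \<Longrightarrow> \<exists>p. awalk v p t"
  using st by (auto simp: st_dag_def apath_def)

lemma from_s_arc: "e \<in> arcs G \<Longrightarrow> \<exists>p. awalk s p (tail G e)"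
  by (rule from_s[OF tail_in_verts])
lemma to_t_arc: "e \<in> arcs G \<Longrightarrow> \<exists>p. awalk (head G e) p t"
  by (rule to_t[OF head_in_verts])
lemma from_s_arc': "e \<in> arcs G \<Longrightarrow> \<exists>p. awalk s p (head G e)"
  by (rule from_s[OF head_in_verts])
lemma to_t_arc': "e \<in> arcs G \<Longrightarrow> \<exists>p. awalk (tail G e) p t"
  by (rule to_t[OF tail_in_verts])

lemma acyc: assumes "e \<in> arcs G" "awalk (head G e) p (tail G e)" shows False
proof -
  have "awalk (tail G e) (e # p) (tail G e)" using assms by (simp add: awalk_Cons_iff)
  then show False using dag unfolding is_dag_def by blast
qed

lemma split_walk: assumes "awalk u p v" "e \<in> set p"
  obtains A B where "p = A @ e # B" "awalk u A (tail G e)" "awalk (head G e) B v"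
proof -
  obtain A B where p: "p = A @ e # B" using split_list[OF assms(2)] by blast
  have "awalk u A (awlast u A)" "awalk (awlast u A) (e # B) v" using assms(1) p by auto
  then show ?thesis using that p by (auto simp: awalk_Cons_iff)
qed

lemma walk_cat: "awalk u p w \<Longrightarrow> awalk w q v \<Longrightarrow> awalk u (p @ q) v"
  by (rule awalk_appendI)

lemma walk_arc: "awalk u p (tail G e) \<Longrightarrow> e \<in> arcs G \<Longrightarrow> awalk (head G e) q v \<Longrightarrow> awalk u (p @ e # q) v"
  by (rule awalk_appendI) (auto simp: awalk_Cons_iff)

lemma bridge_iff: "bridge G x y b \<longleftrightarrow> b \<in> arcs G \<and> (\<forall>p. awalk x p y \<longrightarrow> b \<in> set p)"
  by (simp add: bridge_def apath_iff)

lemma sdom_iff: "s_dom G s a e \<longleftrightarrow> a = e \<or> (\<forall>p. awalk s p (tail G e) \<longrightarrow> a \<in> set p)"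
  by (simp add: s_dom_def apath_iff)
lemma tdom_iff: "t_dom G t a e \<longleftrightarrow> a = e \<or> (\<forall>p. awalk (head G e) p t \<longrightarrow> a \<in> set p)"
  by (simp add: t_dom_def apath_iff)

lemma set_ext: assumes "a \<in> arcs G"
  shows "set (ext G s t a) = {b. bridge G s (tail G a) b} \<union> {a} \<union> {b. bridge G (head G a) t b}"
proof -
  obtain p1 where p1: "apath s p1 (tail G a)" using from_s[of "tail G a"] assms walk_apath by auto
  obtain p2 where p2: "apath (head G a) p2 t" using to_t[of "head G a"] assms walk_apath by auto
  have e1: "apath s (SOME p. apath s p (tail G a)) (tail G a)" using p1 by (rule someI)
  have e2: "apath (head G a) (SOME p. apath (head G a) p t) t" using p2 by (rule someI)
  show ?thesis unfolding ext_def using e1 e2 by (auto simp: bridge_def)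
qed

definition R where "R a b \<longleftrightarrow> a \<in> arcs G \<and> b \<in> arcs G \<and> (\<exists>p. awalk (head G a) p (tail G b))"

lemma R_trans: "R a b \<Longrightarrow> R b c \<Longrightarrow> R a c"
  unfolding R_def by (meson walk_arc)

lemma R_irrefl: "\<not> R a a"
  unfolding R_def using acyc by blast

lemma walk_sorted: "awalk u p v \<Longrightarrow> sorted_wrt R p"
proof (induction p arbitrary: u)
  case Nil then show ?case by simp
next
  case (Cons e p)
  then have e: "e \<in> arcs G" and w: "awalk (head G e) p v" by (auto simp: awalk_Cons_iff)
  have "R e x" if xp: "x \<in> set p" for x
  proof -
    obtain A B where "awalk (head G e) A (tail G x)" "awalk (head G x) B v"
      using split_walk[OF w xp] by blast
    moreover have "x \<in> arcs G" using w xp by auto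
    ultimately show ?thesis using e unfolding R_def by blast
  qed
  then show ?case using Cons.IH[OF w] by simp
qed

lemma arcseq_iff: "arc_sequence G X \<longleftrightarrow> set X \<subseteq> arcs G \<and> sorted_wrt R X"
proof
  assume a: "arc_sequence G X"
  have "R (X ! i) (X ! Suc i)" if i: "Suc i < length X" for i
  proof -
    have "X ! i \<in> arcs G" "X ! Suc i \<in> arcs G" using a i nth_mem[of i X] nth_mem[of "Suc i" X]
      unfolding arc_sequence_def by auto
    moreover have "arc_reaches G (X ! i) (X ! Suc i)" using a i unfolding arc_sequence_def by blast
    ultimately show ?thesis unfolding R_def arc_reaches_def apath_def by blast
  qed
  then have "successively R X" unfolding successively_conv_nth by blast
  then show "set X \<subseteq> arcs G \<and> sorted_wrt R X" using successively_iff_sorted_wrt_strong[of X R] R_trans a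
    unfolding arc_sequence_def by blast
next
  assume a: "set X \<subseteq> arcs G \<and> sorted_wrt R X"
  then have "successively R X" using successively_if_sorted_wrt by blast
  then have "\<forall>i. Suc i < length X \<longrightarrow> R (X ! i) (X ! Suc i)" unfolding successively_conv_nth by blast
  then show "arc_sequence G X" using a unfolding arc_sequence_def R_def arc_reaches_def apath_iff by blast
qed

lemma sorted_unique: "sorted_wrt R xs \<Longrightarrow> sorted_wrt R ys \<Longrightarrow> set xs = set ys \<Longrightarrow> xs = ys"
proof (induction xs arbitrary: ys)
  case Nil then show ?case by simp
next
  case (Cons x xs)
  then obtain y ys' where ys: "ys = y # ys'" by (cases ys) auto
  have "x = y"
  proof (rule ccontr)
    assume "x \<noteq> y"
    then have "x \<in> set ys'" "y \<in> set xs" using Cons.prems ys by auto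
    then have "R y x" "R x y" using Cons.prems ys by auto
    then show False using R_trans R_irrefl by blast
  qed
  moreover have "x \<notin> set xs" "y \<notin> set ys'" using Cons.prems ys R_irrefl by auto
  ultimately have "set xs = set ys'" using Cons.prems ys by auto
  then show ?case using Cons ys \<open>x = y\<close> by auto
qed

lemma ext_seq: assumes a: "a \<in> arcs G" shows "arc_sequence G (ext G s t a)"
proof -
  obtain p1 where p1: "apath s p1 (tail G a)" using from_s[of "tail G a"] assms walk_apath by auto
  obtain p2 where p2: "apath (head G a) p2 t" using to_t[of "head G a"] assms walk_apath by auto
  define q1 where "q1 = (SOME p. apath s p (tail G a))"
  define q2 where "q2 = (SOME p. apath (head G a) p t)"
  have e1: "awalk s q1 (tail G a)" using p1 unfolding q1_def apath_iff by (rule someI)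
  have e2: "awalk (head G a) q2 t" using p2 unfolding q2_def apath_iff by (rule someI)
  have w: "awalk s (q1 @ a # q2) t" using walk_arc[OF e1 a e2] .
  then have so: "sorted_wrt R (q1 @ a # q2)" by (rule walk_sorted)
  have sx: "set (q1 @ a # q2) \<subseteq> arcs G" using w unfolding awalk_def by blast
  have "ext G s t a = filter (bridge G s (tail G a)) q1 @ a # filter (bridge G (head G a) t) q2"
    unfolding ext_def q1_def q2_def by simp
  moreover have "sorted_wrt R (filter (bridge G s (tail G a)) q1 @ a # filter (bridge G (head G a) t) q2)"
  proof -
    have 1: "sorted_wrt R q1" "sorted_wrt R q2" "\<forall>x\<in>set q1. R x a" "\<forall>y\<in>set q2. R a y"
      "\<forall>x\<in>set q1. \<forall>y\<in>set q2. R x y"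
      using so unfolding sorted_wrt_append by auto
    show ?thesis unfolding sorted_wrt_append using 1
      by (simp add: sorted_wrt_filter)
  qed
  moreover have "set (ext G s t a) \<subseteq> arcs G" using sx unfolding \<open>ext G s t a = _\<close> by auto
  ultimately show ?thesis unfolding arcseq_iff by simp
qed

lemma ext_in_path: assumes "awalk s P t" "a \<in> set P" shows "set (ext G s t a) \<subseteq> set P"
proof -
  obtain A B where AB: "P = A @ a # B" "awalk s A (tail G a)" "awalk (head G a) B t"
    using split_walk[OF assms] by blast
  have a: "a \<in> arcs G" using assms by auto
  have 1: "x \<in> set A" if "bridge G s (tail G a) x" for x using that AB(2) unfolding bridge_iff by blast
  have 2: "x \<in> set B" if "bridge G (head G a) t x" for x using that AB(3) unfolding bridge_iff by blast
  show ?thesis unfolding set_ext[OF a] AB(1) using 1 2 by auto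
qed

lemma ext_path: assumes "a \<in> arcs G" shows "\<exists>P. awalk s P t \<and> a \<in> set P"
proof -
  obtain p1 where "awalk s p1 (tail G a)" using from_s[of "tail G a"] assms by auto
  moreover obtain p2 where "awalk (head G a) p2 t" using to_t[of "head G a"] assms by auto
  ultimately have "awalk s (p1 @ a # p2) t" using assms walk_arc by blast
  moreover have "a \<in> set (p1 @ a # p2)" by simp
  ultimately show ?thesis by blast
qed

lemma safe_ext: assumes a: "a \<in> arcs G" and X: "arc_sequence G X" "set X \<subseteq> set (ext G s t a)"
  shows "safe G s t X"
proof -
  obtain P where P: "awalk s P t" "a \<in> set P" using ext_path[OF a] by blast
  have "\<exists>P. apath s P t \<and> subseq_arcs X P"
    using P ext_in_path[OF P] X unfolding subseq_arcs_def apath_iff by blast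
  moreover have "\<exists>P\<in>C. subseq_arcs X P" if C: "arc_path_cover G s t C" for C
  proof -
    obtain P where "P \<in> C" "a \<in> set P" using C a unfolding arc_path_cover_def by blast
    moreover then have "awalk s P t" using C unfolding arc_path_cover_def apath_iff by blast
    ultimately show ?thesis using ext_in_path X unfolding subseq_arcs_def by blast
  qed
  ultimately show ?thesis using X unfolding safe_def by blast
qed

lemma safe_sub: assumes "safe G s t X" shows "\<exists>a\<in>arcs G. set X \<subseteq> set (ext G s t a)"
proof (rule ccontr)
  assume na: "\<not> ?thesis"
  define C where "C = {P. apath s P t \<and> \<not> set X \<subseteq> set P}"
  have "arc_path_cover G s t C" unfolding arc_path_cover_def
  proof (intro conjI ballI)
    fix P assume "P \<in> C" then show "apath s P t" unfolding C_def by blast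
  next
    fix a assume a: "a \<in> arcs G"
    then obtain x where x: "x \<in> set X" "x \<notin> set (ext G s t a)" using na by blast
    then have "x \<noteq> a" "\<not> bridge G s (tail G a) x" "\<not> bridge G (head G a) t x" using set_ext[OF a] by auto
    moreover have "x \<in> arcs G" using assms x unfolding safe_def arc_sequence_def by blast
    ultimately obtain p1 p2 where "awalk s p1 (tail G a)" "x \<notin> set p1" "awalk (head G a) p2 t" "x \<notin> set p2"
      unfolding bridge_iff by blast
    then have w: "awalk s (p1 @ a # p2) t" and "x \<notin> set (p1 @ a # p2)" using a walk_arc \<open>x \<noteq> a\<close> by (blast, simp)
    then have "p1 @ a # p2 \<in> C" using x w unfolding C_def apath_iff by blast
    moreover have "a \<in> set (p1 @ a # p2)" by simp
    ultimately show "\<exists>P\<in>C. a \<in> set P" by blast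
  qed
  then obtain P where "P \<in> C" "subseq_arcs X P" using assms unfolding safe_def by blast
  then show False unfolding C_def subseq_arcs_def by blast
qed

lemma maximal_iff: assumes uv: "uv \<in> arcs G"
  shows "maximal_safe G s t (ext G s t uv) \<longleftrightarrow> \<not> (\<exists>a\<in>arcs G. set (ext G s t uv) \<subset> set (ext G s t a))"
proof
  assume m: "maximal_safe G s t (ext G s t uv)"
  show "\<not> (\<exists>a\<in>arcs G. set (ext G s t uv) \<subset> set (ext G s t a))"
  proof
    assume "\<exists>a\<in>arcs G. set (ext G s t uv) \<subset> set (ext G s t a)"
    then obtain a where a: "a \<in> arcs G" "set (ext G s t uv) \<subset> set (ext G s t a)" by blast
    have "safe G s t (ext G s t a)" using safe_ext[OF a(1) ext_seq[OF a(1)]] by blast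
    moreover have "ext G s t uv \<noteq> ext G s t a" using a by auto
    ultimately show False using m a unfolding maximal_safe_def subseq_arcs_def by blast
  qed
next
  assume n: "\<not> (\<exists>a\<in>arcs G. set (ext G s t uv) \<subset> set (ext G s t a))"
  have sf: "safe G s t (ext G s t uv)" using safe_ext[OF uv ext_seq[OF uv]] by blast
  have "\<not> (\<exists>Y. safe G s t Y \<and> subseq_arcs (ext G s t uv) Y \<and> ext G s t uv \<noteq> Y)"
  proof
    assume "\<exists>Y. safe G s t Y \<and> subseq_arcs (ext G s t uv) Y \<and> ext G s t uv \<noteq> Y"
    then obtain Y where Y: "safe G s t Y" "set (ext G s t uv) \<subseteq> set Y" "ext G s t uv \<noteq> Y"
      unfolding subseq_arcs_def by blast
    obtain a where a: "a \<in> arcs G" "set Y \<subseteq> set (ext G s t a)" using safe_sub[OF Y(1)] by blast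
    have "set Y \<noteq> set (ext G s t uv)"
    proof
      assume "set Y = set (ext G s t uv)"
      moreover have "sorted_wrt R Y" using Y(1) unfolding safe_def arcseq_iff by blast
      moreover have "sorted_wrt R (ext G s t uv)" using ext_seq[OF uv] unfolding arcseq_iff by blast
      ultimately show False using sorted_unique Y(3) by metis
    qed
    then show False using n a Y by blast
  qed
  then show "maximal_safe G s t (ext G s t uv)" using sf unfolding maximal_safe_def by blast
qed


lemma walk_last: assumes "awalk u p v" "p \<noteq> []" shows "last p \<in> arcs G \<and> head G (last p) = v"
proof -
  have "awalk u (butlast p @ [last p]) v" using assms by simp
  then show ?thesis by (simp add: awalk_Cons_iff awalk_Nil_iff)
qed

lemma walk_snoc: assumes "awalk u p (tail G e)" "e \<in> arcs G" shows "awalk u (p @ [e]) (head G e)"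
proof -
  have "awalk (head G e) [] (head G e)" using assms(2) by (simp add: awalk_Nil_iff)
  then show ?thesis using walk_arc[OF assms] by blast
qed

lemma closed_walk: "awalk u p u \<Longrightarrow> p \<noteq> [] \<Longrightarrow> False"
  using dag unfolding is_dag_def by blast

lemma notin_split: assumes "awalk (head G a) B v" "a \<in> set B" shows False
proof -
  obtain B1 B2 where "awalk (head G a) B1 (tail G a)" using split_walk[OF assms] by blast
  moreover have "a \<in> arcs G" using assms unfolding awalk_def by blast
  ultimately show False using acyc by blast
qed

lemma B1: assumes uv: "uv \<in> arcs G" and e: "e \<in> arcs G" and sd: "strict_s_dom G s uv e"
  shows "(\<forall>p. awalk s p (head G uv) \<longrightarrow> uv \<in> set p) \<and> (\<exists>f\<in>arcs G. tail G f = head G uv)"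
proof -
  obtain P where P: "awalk s P (tail G e)" using from_s_arc[OF e] by blast
  have ne: "uv \<noteq> e" using sd unfolding strict_s_dom_def by blast
  have "uv \<in> set P" using sd P ne unfolding strict_s_dom_def sdom_iff by blast
  then obtain A B where AB: "awalk s A (tail G uv)" "awalk (head G uv) B (tail G e)"
    using split_walk[OF P] by blast
  have nB: "uv \<notin> set B" using notin_split AB(2) by blast
  have 1: "uv \<in> set Q" if Q: "awalk s Q (head G uv)" for Q
  proof (rule ccontr)
    assume "uv \<notin> set Q"
    then have "uv \<notin> set (Q @ B)" using nB by simp
    moreover have "awalk s (Q @ B) (tail G e)" using walk_cat[OF Q AB(2)] .
    ultimately show False using sd ne unfolding strict_s_dom_def sdom_iff by blast
  qed
  have 2: "\<exists>f\<in>arcs G. tail G f = head G uv"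
  proof (cases B)
    case Nil
    then show ?thesis using AB(2) e by (auto simp: awalk_Nil_iff)
  next
    case (Cons b B')
    then show ?thesis using AB(2) by (auto simp: awalk_Cons_iff)
  qed
  show ?thesis using 1 2 by blast
qed

lemma B2: assumes uv: "uv \<in> arcs G" and all: "\<forall>p. awalk s p (head G uv) \<longrightarrow> uv \<in> set p"
  and f: "f \<in> arcs G" "tail G f = head G uv"
  shows "is_idom_s G s uv f"
proof -
  have "uv \<noteq> f"
  proof
    assume "uv = f"
    then have "awalk (head G uv) [] (tail G uv)" using f uv by (simp add: awalk_Nil_iff)
    then show False using acyc uv by blast
  qed
  then have sd: "strict_s_dom G s uv f" using uv all f unfolding strict_s_dom_def sdom_iff by simp
  have "s_dom G s y uv" if y: "strict_s_dom G s y f" for y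
  proof -
    have yall: "\<forall>p. awalk s p (head G uv) \<longrightarrow> y \<in> set p" and yf: "y \<noteq> f"
      using y f unfolding strict_s_dom_def sdom_iff by auto
    have "y \<in> set R" if R: "awalk s R (tail G uv)" and yu: "y \<noteq> uv" for R
    proof -
      have "awalk s (R @ [uv]) (head G uv)" using walk_snoc[OF R uv] .
      then have "y \<in> set (R @ [uv])" using yall by blast
      then show ?thesis using yu by simp
    qed
    then show ?thesis unfolding sdom_iff by blast
  qed
  then show ?thesis using sd unfolding is_idom_s_def by blast
qed

lemma leaf_s_iff: assumes uv: "uv \<in> arcs G"
  shows "s_dom_leaf G s uv \<longleftrightarrow> \<not> (\<exists>e\<in>arcs G. strict_s_dom G s uv e)"
proof
  assume l: "s_dom_leaf G s uv"
  show "\<not> (\<exists>e\<in>arcs G. strict_s_dom G s uv e)"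
  proof
    assume "\<exists>e\<in>arcs G. strict_s_dom G s uv e"
    then obtain e where "e \<in> arcs G" "strict_s_dom G s uv e" by blast
    then obtain f where "\<forall>p. awalk s p (head G uv) \<longrightarrow> uv \<in> set p" "f \<in> arcs G" "tail G f = head G uv"
      using B1[OF uv] by blast
    then have "is_idom_s G s uv f" using B2[OF uv] by blast
    then show False using l \<open>f \<in> arcs G\<close> unfolding s_dom_leaf_def by blast
  qed
next
  assume "\<not> (\<exists>e\<in>arcs G. strict_s_dom G s uv e)"
  then show "s_dom_leaf G s uv" unfolding s_dom_leaf_def is_idom_s_def by blast
qed

lemma B4: assumes uv: "uv \<in> arcs G" and e: "e \<in> arcs G" and sd: "strict_s_dom G s uv e"
  shows "set (ext G s t uv) \<subseteq> set (ext G s t e)"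
proof -
  have ne: "uv \<noteq> e" using sd unfolding strict_s_dom_def by blast
  have dom: "uv \<in> set P" if "awalk s P (tail G e)" for P using sd ne that unfolding strict_s_dom_def sdom_iff by blast
  have 1: "bridge G s (tail G e) b" if b: "bridge G s (tail G uv) b" for b
    unfolding bridge_iff
  proof (intro conjI allI impI)
    show "b \<in> arcs G" using b unfolding bridge_iff by blast
  next
    fix P assume P: "awalk s P (tail G e)"
    obtain A B where "P = A @ uv # B" "awalk s A (tail G uv)" using split_walk[OF P dom[OF P]] by blast
    then show "b \<in> set P" using b unfolding bridge_iff by auto
  qed
  have 2: "bridge G s (tail G e) uv" unfolding bridge_iff using uv dom by blast
  have 3: "b \<in> set (ext G s t e)" if b: "bridge G (head G uv) t b" for b
  proof (rule ccontr)
    assume "b \<notin> set (ext G s t e)"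
    then have "b \<noteq> e" "\<not> bridge G s (tail G e) b" "\<not> bridge G (head G e) t b" using set_ext[OF e] by auto
    moreover have "b \<in> arcs G" using b unfolding bridge_iff by blast
    ultimately obtain P Q where P: "awalk s P (tail G e)" "b \<notin> set P" and Q: "awalk (head G e) Q t" "b \<notin> set Q"
      unfolding bridge_iff by blast
    obtain A B where AB: "P = A @ uv # B" "awalk (head G uv) B (tail G e)" using split_walk[OF P(1) dom[OF P(1)]] by blast
    have "awalk (head G uv) (B @ e # Q) t" using walk_arc[OF AB(2) e Q(1)] .
    moreover have "b \<notin> set (B @ e # Q)" using P(2) Q(2) AB(1) \<open>b \<noteq> e\<close> by simp
    ultimately show False using b unfolding bridge_iff by blast
  qed
  show ?thesis unfolding set_ext[OF uv] using 1 2 3 set_ext[OF e] by blast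
qed

lemma B5: assumes uv: "uv \<in> arcs G" and all: "\<forall>p. awalk s p (head G uv) \<longrightarrow> uv \<in> set p"
  shows "in_arcs G (head G uv) = {uv}"
proof -
  have "g = uv" if g: "g \<in> arcs G" "head G g = head G uv" for g
  proof (rule ccontr)
    assume gu: "g \<noteq> uv"
    obtain P where P: "awalk s P (tail G g)" using from_s_arc[OF g(1)] by blast
    have "awalk s (P @ [g]) (head G uv)" using walk_snoc[OF P g(1)] g(2) by simp
    then have "uv \<in> set (P @ [g])" using all by blast
    then have "uv \<in> set P" using gu by simp
    then obtain A B where "awalk (head G uv) B (tail G g)" using split_walk[OF P] by blast
    then have "awalk (head G uv) (B @ [g]) (head G uv)" using walk_snoc[of _ B g] g by simp
    then show False using closed_walk by blast
  qed
  then show ?thesis using uv by auto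
qed

lemma B6: assumes comp: "arc_compressed G" and uv: "uv \<in> arcs G" and e: "e \<in> arcs G"
  and sd: "strict_s_dom G s uv e"
  shows "\<exists>a\<in>arcs G. set (ext G s t uv) \<subset> set (ext G s t a)"
proof -
  define x where "x = head G uv"
  have all: "\<forall>p. awalk s p x \<longrightarrow> uv \<in> set p" and ex: "\<exists>f\<in>arcs G. tail G f = x"
    using B1[OF uv e sd] unfolding x_def by blast+
  have xv: "x \<in> verts G" unfolding x_def using head_in_verts[OF uv] .
  have "in_degree G x = 1" using B5[OF uv] all unfolding x_def in_degree_def by simp
  then have o1: "out_degree G x \<noteq> 1" using comp xv unfolding arc_compressed_def by blast
  have "out_arcs G x \<noteq> {}" using ex by auto
  then have "out_degree G x \<noteq> 0" unfolding out_degree_def using finite_out_arcs by simp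
  with o1 have "2 \<le> card (out_arcs G x)" unfolding out_degree_def by simp
  then obtain f f' where ff: "f \<in> out_arcs G x" "f' \<in> out_arcs G x" "f \<noteq> f'"
  proof -
    have "\<not> card (out_arcs G x) \<le> Suc 0" using \<open>2 \<le> card (out_arcs G x)\<close> by simp
    then show ?thesis using that card_le_Suc0_iff_eq[OF finite_out_arcs] by blast
  qed
  then have f: "f \<in> arcs G" "tail G f = x" and f': "f' \<in> arcs G" "tail G f' = x" by auto
  have idom: "is_idom_s G s uv f" using B2[OF uv] all f unfolding x_def by blast
  then have sub: "set (ext G s t uv) \<subseteq> set (ext G s t f)" using B4[OF uv f(1)] unfolding is_idom_s_def by blast
  have fin: "f \<in> set (ext G s t f)" using set_ext[OF f(1)] by blast
  have fu: "f \<noteq> uv" using idom unfolding is_idom_s_def strict_s_dom_def by blast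
  have nb1: "\<not> bridge G s (tail G uv) f"
  proof
    assume b: "bridge G s (tail G uv) f"
    obtain P where P: "awalk s P (tail G uv)" using from_s_arc[OF uv] by blast
    then have "f \<in> set P" using b unfolding bridge_iff by blast
    then obtain B where "awalk (head G f) B (tail G uv)" using split_walk[OF P] by blast
    then have "awalk (head G uv) (f # B) (tail G uv)" using f unfolding x_def by (simp add: awalk_Cons_iff)
    then show False using acyc uv by blast
  qed
  have nb2: "\<not> bridge G (head G uv) t f"
  proof
    assume b: "bridge G (head G uv) t f"
    obtain Q where Q: "awalk (head G f') Q t" using to_t_arc[OF f'(1)] by blast
    then have "awalk (head G uv) (f' # Q) t" using f' unfolding x_def by (simp add: awalk_Cons_iff)
    then have "f \<in> set (f' # Q)" using b unfolding bridge_iff by blast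
    then have "f \<in> set Q" using ff(3) by simp
    then obtain B where "awalk (head G f') B (tail G f)" using split_walk[OF Q] by blast
    then have "awalk (head G f') B (tail G f')" using f f' by simp
    then show False using acyc f' by blast
  qed
  have "f \<notin> set (ext G s t uv)" using set_ext[OF uv] fu nb1 nb2 by blast
  then show ?thesis using sub fin f by blast
qed

lemma C1: assumes uv: "uv \<in> arcs G" and e: "e \<in> arcs G" and sd: "strict_t_dom G t uv e"
  shows "(\<forall>p. awalk (tail G uv) p t \<longrightarrow> uv \<in> set p) \<and> (\<exists>f\<in>arcs G. head G f = tail G uv)"
proof -
  obtain P where P: "awalk (head G e) P t" using to_t_arc[OF e] by blast
  have ne: "uv \<noteq> e" using sd unfolding strict_t_dom_def by blast
  have "uv \<in> set P" using sd P ne unfolding strict_t_dom_def tdom_iff by blast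
  then obtain A B where AB: "awalk (head G e) A (tail G uv)" "awalk (head G uv) B t"
    using split_walk[OF P] by blast
  have nA: "uv \<notin> set A"
  proof
    assume "uv \<in> set A"
    then obtain A1 A2 where "awalk (head G uv) A2 (tail G uv)" using split_walk[OF AB(1)] by blast
    then show False using acyc uv by blast
  qed
  have 1: "uv \<in> set Q" if Q: "awalk (tail G uv) Q t" for Q
  proof (rule ccontr)
    assume "uv \<notin> set Q"
    then have "uv \<notin> set (A @ Q)" using nA by simp
    moreover have "awalk (head G e) (A @ Q) t" using walk_cat[OF AB(1) Q] .
    ultimately show False using sd ne unfolding strict_t_dom_def tdom_iff by blast
  qed
  have "awalk (tail G e) (e # A) (tail G uv)" using AB(1) e by (simp add: awalk_Cons_iff)
  then have "last (e # A) \<in> arcs G \<and> head G (last (e # A)) = tail G uv" using walk_last by blast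
  then have 2: "\<exists>f\<in>arcs G. head G f = tail G uv" by blast
  show ?thesis using 1 2 by blast
qed

lemma C2: assumes uv: "uv \<in> arcs G" and all: "\<forall>p. awalk (tail G uv) p t \<longrightarrow> uv \<in> set p"
  and f: "f \<in> arcs G" "head G f = tail G uv"
  shows "is_idom_t G t uv f"
proof -
  have "uv \<noteq> f"
  proof
    assume "uv = f"
    then have "awalk (head G uv) [] (tail G uv)" using f uv by (simp add: awalk_Nil_iff)
    then show False using acyc uv by blast
  qed
  then have sd: "strict_t_dom G t uv f" using uv all f unfolding strict_t_dom_def tdom_iff by simp
  have "t_dom G t y uv" if y: "strict_t_dom G t y f" for y
  proof -
    have yall: "\<forall>p. awalk (tail G uv) p t \<longrightarrow> y \<in> set p" and yf: "y \<noteq> f"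
      using y f unfolding strict_t_dom_def tdom_iff by auto
    have "y \<in> set R" if R: "awalk (head G uv) R t" and yu: "y \<noteq> uv" for R
    proof -
      have "awalk (tail G uv) (uv # R) t" using R uv by (simp add: awalk_Cons_iff)
      then have "y \<in> set (uv # R)" using yall by blast
      then show ?thesis using yu by simp
    qed
    then show ?thesis unfolding tdom_iff by blast
  qed
  then show ?thesis using sd unfolding is_idom_t_def by blast
qed

lemma leaf_t_iff: assumes uv: "uv \<in> arcs G"
  shows "t_dom_leaf G t uv \<longleftrightarrow> \<not> (\<exists>e\<in>arcs G. strict_t_dom G t uv e)"
proof
  assume l: "t_dom_leaf G t uv"
  show "\<not> (\<exists>e\<in>arcs G. strict_t_dom G t uv e)"
  proof
    assume "\<exists>e\<in>arcs G. strict_t_dom G t uv e"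
    then obtain e where "e \<in> arcs G" "strict_t_dom G t uv e" by blast
    then obtain f where "\<forall>p. awalk (tail G uv) p t \<longrightarrow> uv \<in> set p" "f \<in> arcs G" "head G f = tail G uv"
      using C1[OF uv] by blast
    then have "is_idom_t G t uv f" using C2[OF uv] by blast
    then show False using l \<open>f \<in> arcs G\<close> unfolding t_dom_leaf_def by blast
  qed
next
  assume "\<not> (\<exists>e\<in>arcs G. strict_t_dom G t uv e)"
  then show "t_dom_leaf G t uv" unfolding t_dom_leaf_def is_idom_t_def by blast
qed

lemma C4: assumes uv: "uv \<in> arcs G" and e: "e \<in> arcs G" and sd: "strict_t_dom G t uv e"
  shows "set (ext G s t uv) \<subseteq> set (ext G s t e)"
proof -
  have ne: "uv \<noteq> e" using sd unfolding strict_t_dom_def by blast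
  have dom: "uv \<in> set P" if "awalk (head G e) P t" for P using sd ne that unfolding strict_t_dom_def tdom_iff by blast
  have 1: "bridge G (head G e) t b" if b: "bridge G (head G uv) t b" for b
    unfolding bridge_iff
  proof (intro conjI allI impI)
    show "b \<in> arcs G" using b unfolding bridge_iff by blast
  next
    fix P assume P: "awalk (head G e) P t"
    obtain A B where "P = A @ uv # B" "awalk (head G uv) B t" using split_walk[OF P dom[OF P]] by blast
    then show "b \<in> set P" using b unfolding bridge_iff by auto
  qed
  have 2: "bridge G (head G e) t uv" unfolding bridge_iff using uv dom by blast
  have 3: "b \<in> set (ext G s t e)" if b: "bridge G s (tail G uv) b" for b
  proof (rule ccontr)
    assume "b \<notin> set (ext G s t e)"
    then have "b \<noteq> e" "\<not> bridge G s (tail G e) b" "\<not> bridge G (head G e) t b" using set_ext[OF e] by auto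
    moreover have "b \<in> arcs G" using b unfolding bridge_iff by blast
    ultimately obtain P Q where P: "awalk s P (tail G e)" "b \<notin> set P" and Q: "awalk (head G e) Q t" "b \<notin> set Q"
      unfolding bridge_iff by blast
    obtain A B where AB: "Q = A @ uv # B" "awalk (head G e) A (tail G uv)" using split_walk[OF Q(1) dom[OF Q(1)]] by blast
    have "awalk s (P @ e # A) (tail G uv)" using walk_arc[OF P(1) e AB(2)] .
    moreover have "b \<notin> set (P @ e # A)" using P(2) Q(2) AB(1) \<open>b \<noteq> e\<close> by simp
    ultimately show False using b unfolding bridge_iff by blast
  qed
  show ?thesis unfolding set_ext[OF uv] using 1 2 3 set_ext[OF e] by blast
qed

lemma C5: assumes uv: "uv \<in> arcs G" and all: "\<forall>p. awalk (tail G uv) p t \<longrightarrow> uv \<in> set p"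
  shows "out_arcs G (tail G uv) = {uv}"
proof -
  have "g = uv" if g: "g \<in> arcs G" "tail G g = tail G uv" for g
  proof (rule ccontr)
    assume gu: "g \<noteq> uv"
    obtain P where P: "awalk (head G g) P t" using to_t_arc[OF g(1)] by blast
    have "awalk (tail G uv) (g # P) t" using P g by (simp add: awalk_Cons_iff)
    then have "uv \<in> set (g # P)" using all by blast
    then have "uv \<in> set P" using gu by simp
    then obtain A B where "awalk (head G g) A (tail G uv)" using split_walk[OF P] by blast
    then have "awalk (head G g) A (tail G g)" using g by simp
    then show False using acyc g(1) by blast
  qed
  then show ?thesis using uv by auto
qed

lemma C6: assumes comp: "arc_compressed G" and uv: "uv \<in> arcs G" and e: "e \<in> arcs G"
  and sd: "strict_t_dom G t uv e"
  shows "\<exists>a\<in>arcs G. set (ext G s t uv) \<subset> set (ext G s t a)"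
proof -
  define x where "x = tail G uv"
  have all: "\<forall>p. awalk x p t \<longrightarrow> uv \<in> set p" and ex: "\<exists>f\<in>arcs G. head G f = x"
    using C1[OF uv e sd] unfolding x_def by blast+
  have xv: "x \<in> verts G" unfolding x_def using tail_in_verts[OF uv] .
  have "out_degree G x = 1" using C5[OF uv] all unfolding x_def out_degree_def by simp
  then have o1: "in_degree G x \<noteq> 1" using comp xv unfolding arc_compressed_def by blast
  have "in_arcs G x \<noteq> {}" using ex by auto
  then have "in_degree G x \<noteq> 0" unfolding in_degree_def using finite_in_arcs by simp
  with o1 have "2 \<le> card (in_arcs G x)" unfolding in_degree_def by simp
  then obtain f f' where ff: "f \<in> in_arcs G x" "f' \<in> in_arcs G x" "f \<noteq> f'"
  proof -
    have "\<not> card (in_arcs G x) \<le> Suc 0" using \<open>2 \<le> card (in_arcs G x)\<close> by simp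
    then show ?thesis using that card_le_Suc0_iff_eq[OF finite_in_arcs] by blast
  qed
  then have f: "f \<in> arcs G" "head G f = x" and f': "f' \<in> arcs G" "head G f' = x" by auto
  have idom: "is_idom_t G t uv f" using C2[OF uv] all f unfolding x_def by blast
  then have sub: "set (ext G s t uv) \<subseteq> set (ext G s t f)" using C4[OF uv f(1)] unfolding is_idom_t_def by blast
  have fin: "f \<in> set (ext G s t f)" using set_ext[OF f(1)] by blast
  have fu: "f \<noteq> uv" using idom unfolding is_idom_t_def strict_t_dom_def by blast
  have nb1: "\<not> bridge G (head G uv) t f"
  proof
    assume b: "bridge G (head G uv) t f"
    obtain P where P: "awalk (head G uv) P t" using to_t_arc[OF uv] by blast
    then have "f \<in> set P" using b unfolding bridge_iff by blast
    then obtain A where "awalk (head G uv) A (tail G f)" using split_walk[OF P] by blast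
    then have "awalk (head G uv) (A @ [f]) (head G f)" using walk_snoc f(1) by blast
    then have "awalk (head G uv) (A @ [f]) (tail G uv)" using f unfolding x_def by simp
    then show False using acyc uv by blast
  qed
  have nb2: "\<not> bridge G s (tail G uv) f"
  proof
    assume b: "bridge G s (tail G uv) f"
    obtain Q where Q: "awalk s Q (tail G f')" using from_s_arc[OF f'(1)] by blast
    then have "awalk s (Q @ [f']) (tail G uv)" using walk_snoc[OF Q f'(1)] f' unfolding x_def by simp
    then have "f \<in> set (Q @ [f'])" using b unfolding bridge_iff by blast
    then have "f \<in> set Q" using ff(3) by simp
    then obtain B where "awalk (head G f) B (tail G f')" using split_walk[OF Q] by blast
    then have "awalk (head G f') B (tail G f')" using f f' by simp
    then show False using acyc f'(1) by blast
  qed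
  have "f \<notin> set (ext G s t uv)" using set_ext[OF uv] fu nb1 nb2 by blast
  then show ?thesis using sub fin f by blast
qed

lemma main: assumes comp: "arc_compressed G" and uv: "uv \<in> arcs G"
  shows "maximal_safe G s t (ext G s t uv) \<longleftrightarrow> s_dom_leaf G s uv \<and> t_dom_leaf G t uv"
proof -
  have "(\<exists>a\<in>arcs G. set (ext G s t uv) \<subset> set (ext G s t a)) \<longleftrightarrow> \<not> (s_dom_leaf G s uv \<and> t_dom_leaf G t uv)"
  proof
    assume "\<exists>a\<in>arcs G. set (ext G s t uv) \<subset> set (ext G s t a)"
    then obtain a where a: "a \<in> arcs G" "set (ext G s t uv) \<subset> set (ext G s t a)" by blast
    have "uv \<in> set (ext G s t uv)" using set_ext[OF uv] by blast
    then have "uv \<in> set (ext G s t a)" using a by blast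
    moreover have "a \<noteq> uv" using a by blast
    ultimately have "bridge G s (tail G a) uv \<or> bridge G (head G a) t uv" using set_ext[OF a(1)] by blast
    then have "strict_s_dom G s uv a \<or> strict_t_dom G t uv a"
      using \<open>a \<noteq> uv\<close> unfolding strict_s_dom_def strict_t_dom_def s_dom_def t_dom_def bridge_def by blast
    then show "\<not> (s_dom_leaf G s uv \<and> t_dom_leaf G t uv)" using leaf_s_iff[OF uv] leaf_t_iff[OF uv] a(1) by blast
  next
    assume "\<not> (s_dom_leaf G s uv \<and> t_dom_leaf G t uv)"
    then have "(\<exists>e\<in>arcs G. strict_s_dom G s uv e) \<or> (\<exists>e\<in>arcs G. strict_t_dom G t uv e)"
      using leaf_s_iff[OF uv] leaf_t_iff[OF uv] by blast
    then show "\<exists>a\<in>arcs G. set (ext G s t uv) \<subset> set (ext G s t a)"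
      using B6[OF comp uv] C6[OF comp uv] by blast
  qed
  then show ?thesis using maximal_iff[OF uv] by blast
qed

end

theorem theorem8:
  fixes G :: "('v,'e) pre_digraph" and s t :: 'v and uv :: 'e
  assumes "st_dag G s t" and "arc_compressed G" and "uv \<in> arcs G"
  shows "maximal_safe G s t (ext G s t uv) \<longleftrightarrow> s_dom_leaf G s uv \<and> t_dom_leaf G t uv"
proof -
  have "fin_digraph G" using assms(1) unfolding st_dag_def by blast
  then interpret sdag G s t using assms(1) by (simp add: sdag_def sdag_axioms_def)
  show ?thesis using main assms(2,3) by blast
qed

end
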